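(* Fix a positive integer $k$ and let $a_n=\left\lceil \frac{2^{n+k-1}}{2^k+1}\right\rceil$ for $n\ge 1$. Then the sequence $(\Gamma(a_n,a_{n+1}))_{n\ge 1}$ is $$\underbrace{1,\ldots,1}_{k},\underbrace{2,\ldots,2}_{k},\underbrace{1,\ldots,1}_{k},\underbrace{2,\ldots,2}_{k},\ldots,$$ i.e., it consists of alternating blocks of $k$ ones and $k$ twos, starting with a block of ones.
   Context: For relatively prime positive integers $p,q$, exactly one of the equations $px+qy=\frac{(p-1)(q-1)}{2}$ (Equation 1) and $px+qy+1=\frac{(p-1)(q-1)}{2}$ (Equation 2) has a solution in nonnegative integers $(x,y)$. For positive integers $a,b$ with $d=\gcd(a,b)$, $\Gamma(a,b)=1$ if Equation 1 with $(p,q)=(a/d,b/d)$ has a nonnegative integer solution, and $\Gamma(a,b)=2$ otherwise. *)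

theory Defs
  imports Complex_Main
begin

text \<open>The right-hand side (p-1)(q-1)/2 is taken as a rational number; an integer solution requires it
  to be an integer.\<close>
definition eq1_solvable :: "nat \<Rightarrow> nat \<Rightarrow> bool" where
  "eq1_solvable p q \<longleftrightarrow>
     (\<exists>x y :: nat. (of_nat (p * x + q * y) :: rat) = of_nat ((p - 1) * (q - 1)) / 2)"

definition Gamma :: "nat \<Rightarrow> nat \<Rightarrow> nat" where
  "Gamma a b = (let d = gcd a b in if eq1_solvable (a div d) (b div d) then 1 else 2)"

definition seq_a :: "nat \<Rightarrow> nat \<Rightarrow> nat" where
  "seq_a k n = nat \<lceil>(2::real) ^ (n + k - 1) / (2 ^ k + 1)\<rceil>"

end

theory Submission
  imports Defs
begin

definition RR :: "nat \<Rightarrow> nat \<Rightarrow> nat" where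
  "RR k n = (let j = (n - 1) mod (2*k) in if j < k then 2^j else 2^k + 1 - 2^(j-k))"

lemma parity_mod:
  fixes t k :: nat assumes "k > 0"
  shows "even (t div k) \<longleftrightarrow> t mod (2*k) < k"
proof -
  have "t mod (k*2) = k * (t div k mod 2) + t mod k" by (rule mod_mult2_eq)
  moreover have "t mod k < k" using assms by simp
  moreover have "t div k mod 2 = 0 \<or> t div k mod 2 = 1" by auto
  ultimately show ?thesis by (auto simp: mult.commute even_iff_mod_2_eq_zero)
qed

lemma RR_bounds:
  assumes "k \<ge> 1" shows "1 \<le> RR k n \<and> RR k n < 2^k + 1"
proof -
  define j where "j = (n - 1) mod (2*k)"
  have j: "j < 2*k" using assms unfolding j_def by simp
  show ?thesis
  proof (cases "j < k")
    case True
    then have p: "(2::nat)^j < 2^k" by simp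
    have "RR k n = 2^j" using True unfolding RR_def Let_def j_def[symmetric] by simp
    then show ?thesis using p one_le_power[of "2::nat" j] by linarith
  next
    case False
    then have "j - k < k" using j by simp
    then have p: "(2::nat)^(j-k) < 2^k" by simp
    have q: "(1::nat) \<le> 2^(j-k)" by simp
    have "RR k n = 2^k + 1 - 2^(j-k)" using False unfolding RR_def Let_def j_def[symmetric] by simp
    then show ?thesis using p q by linarith
  qed
qed

lemma RR_step:
  assumes "k \<ge> 1" "n \<ge> 1"
  shows "((n-1) mod (2*k) < k \<longrightarrow> RR k (n+1) = 2 * RR k n) \<and>
         (\<not> (n-1) mod (2*k) < k \<longrightarrow> RR k (n+1) + (2^k+1) = 2 * RR k n)"
proof -
  define j where "j = (n - 1) mod (2*k)"
  have j: "j < 2*k" using assms unfolding j_def by simp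
  have nn: "n = Suc (n-1)" using assms by simp
  have jn: "n mod (2*k) = (if Suc j = 2*k then 0 else Suc j)"
    unfolding j_def by (subst nn, subst mod_Suc, simp)
  have R1: "RR k n = (if j < k then 2^j else 2^k + 1 - 2^(j-k))"
    unfolding RR_def Let_def j_def by simp
  have R2: "RR k (n+1) = (let j' = n mod (2*k) in if j' < k then 2^j' else 2^k + 1 - 2^(j'-k))"
    unfolding RR_def by simp
  show ?thesis
  proof (cases "j < k")
    case True
    show ?thesis
    proof (cases "Suc j = k")
      case True
      then have "Suc j \<noteq> 2*k" using assms by simp
      then show ?thesis using True \<open>j<k\<close> unfolding j_def[symmetric] R1 R2 jn Let_def
        by (auto simp flip: power_Suc)
    next
      case False
      then have "Suc j \<noteq> 2*k" "Suc j < k" using \<open>j<k\<close> by auto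
      then show ?thesis using \<open>j<k\<close> unfolding j_def[symmetric] R1 R2 jn Let_def
        by auto
    qed
  next
    case False
    have jk: "j - k < k" using j False by simp
    then have p: "(2::nat)^(j-k) < 2^k" by simp
    show ?thesis
    proof (cases "Suc j = 2*k")
      case True
      then have "Suc (j - k) = k" using assms by simp
      then have "2 * 2^(j-k) = (2::nat)^k" by (metis power_Suc)
      then show ?thesis using True False p unfolding j_def[symmetric] R1 R2 jn Let_def
        by auto
    next
      case F2: False
      then have "\<not> Suc j < k" "Suc j - k = Suc (j - k)" using False by auto
      moreover have "(2::nat)^(Suc (j-k)) \<le> 2^k" by (rule power_increasing) (use jk in auto)
      ultimately show ?thesis using F2 False p unfolding j_def[symmetric] R1 R2 jn Let_def
        by auto
    qed
  qed
qed

lemma RR_dvd: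
  assumes "k \<ge> 1" "n \<ge> 1"
  shows "(2^k+1) dvd (2^(n+k-1) + RR k n)"
  using assms(2)
proof (induction n rule: nat_induct_at_least)
  case base
  have "RR k 1 = 1" unfolding RR_def using assms by simp
  then show ?case by simp
next
  case (Suc n)
  obtain A where A: "2^(n+k-1) + RR k n = (2^k+1) * A" using Suc.IH by blast
  have s2: "Suc n+k-1 = Suc (n+k-1)" using Suc.hyps by simp
  have e: "2^(Suc n+k-1) = 2 * (2::nat)^(n+k-1)" by (subst s2) simp
  show ?case
  proof (cases "(n-1) mod (2*k) < k")
    case True
    then have "RR k (Suc n) = 2 * RR k n" using RR_step[OF assms(1) Suc.hyps] by simp
    then have "2^(Suc n+k-1) + RR k (Suc n) = (2^k+1) * (2*A)" using e A by simp
    then show ?thesis by (simp only: dvd_triv_left)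
  next
    case False
    then have "RR k (Suc n) + (2^k+1) = 2 * RR k n" using RR_step[OF assms(1) Suc.hyps] by simp
    then have "2^(Suc n+k-1) + RR k (Suc n) + (2^k+1) = (2^k+1) * (2*A)" using e A
      by (simp add: algebra_simps)
    then have "2^(Suc n+k-1) + RR k (Suc n) = (2^k+1) * (2*A) - (2^k+1)" by simp
    also have "\<dots> = (2^k+1) * (2*A - 1)" by (simp add: right_diff_distrib')
    finally show ?thesis by (metis dvd_triv_left)
  qed
qed

lemma ceil_lemma:
  fixes m A N r :: nat
  assumes "m > 0" "m * A = 2^N + r" "r < m"
  shows "nat \<lceil>(2::real)^N / m\<rceil> = A"
proof -
  have "real m * real A = 2^N + real r" using assms(2) by (metis of_nat_add of_nat_mult of_nat_numeral of_nat_power)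
  then have x: "(2::real)^N / m = real A - real r / real m" using assms(1)
    by (simp add: field_simps)
  have "real r / real m < 1" using assms by simp
  moreover have "0 \<le> real r / real m" by simp
  ultimately have "\<lceil>(2::real)^N / m\<rceil> = int A" unfolding x
    by (subst ceiling_eq_iff) auto
  then show ?thesis by simp
qed

lemma seq_a_eq:
  assumes "k \<ge> 1" "n \<ge> 1"
  shows "(2^k+1) * seq_a k n = 2^(n+k-1) + RR k n"
proof -
  obtain A where A: "2^(n+k-1) + RR k n = (2^k+1) * A" using RR_dvd[OF assms] by blast
  have c: "nat \<lceil>(2::real)^(n+k-1) / real (2^k+1)\<rceil> = A"
    by (rule ceil_lemma) (use A RR_bounds[OF assms(1), of n] in auto)
  have r: "real (2^k+1) = (2::real)^k+1" by simp
  have "seq_a k n = A" unfolding seq_a_def using c unfolding r .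
  then show ?thesis using A by simp
qed

lemma no_sol:
  fixes a x y :: nat assumes "a \<ge> 2"
  shows "a * x + (2*a-1) * y \<noteq> (a-1)*(2*a-1-1) div 2"
proof
  assume h: "a * x + (2*a-1) * y = (a-1)*(2*a-1-1) div 2"
  have "2*a-1-1 = 2*(a-1)" by simp
  then have "(a-1)*(2*a-1-1) div 2 = (a-1)*(a-1)" by simp
  then have h2: "a * x + (2*a-1) * y = (a-1)*(a-1)" using h by simp
  show False
  proof (cases "y \<ge> a - 1")
    case True
    have "(2*a-1)*y \<ge> (2*a-1)*(a-1)" using True by simp
    moreover have "(2*a-1)*(a-1) > (a-1)*(a-1)" using assms by simp
    ultimately show False using h2 by linarith
  next
    case False
    have "int (a * x + (2*a-1) * y) = int ((a-1)*(a-1))" using h2 by simp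
    then have hi: "int a * int x + (2*int a - 1) * int y = (int a - 1)*(int a - 1)"
      using assms by (simp add: of_nat_diff)
    then have "int y + 1 = int a * (int x + 2 * int y - int a + 2)" by (simp add: algebra_simps)
    then have "int a dvd int y + 1" by simp
    then have "a dvd y + 1" by (metis of_nat_1 of_nat_add of_nat_dvd_iff)
    then have "a \<le> y + 1" by (simp add: dvd_imp_le)
    then show False using False by simp
  qed
qed

theorem theorem1p3:
  fixes k :: nat
  assumes "k \<ge> 1"
  shows "\<forall>n\<ge>1. Gamma (seq_a k n) (seq_a k (n + 1)) = (if even ((n - 1) div k) then 1 else 2)"
proof (intro allI impI)
  fix n :: nat assume n: "n \<ge> 1"
  define m :: nat where "m = 2^k+1"
  define a where "a = seq_a k n"
  define b where "b = seq_a k (n+1)"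
  have ea: "m * a = 2^(n+k-1) + RR k n" unfolding m_def a_def using seq_a_eq[OF assms n] .
  have eb: "m * b = 2^(n+k) + RR k (n+1)" unfolding m_def b_def using seq_a_eq[OF assms, of "n+1"] by simp
  have s2: "n+k = Suc (n+k-1)" using n by simp
  have e2: "2^(n+k) = 2 * (2::nat)^(n+k-1)" by (subst s2) simp
  have par: "even ((n - 1) div k) \<longleftrightarrow> (n-1) mod (2*k) < k" using parity_mod assms by simp
  have mpos: "m > 0" unfolding m_def by simp
  have apos: "a > 0" using ea RR_bounds[OF assms, of n] by (cases a) auto
  show "Gamma a b = (if even ((n - 1) div k) then 1 else 2)"
  proof (cases "(n-1) mod (2*k) < k")
    case True
    then have "RR k (n+1) = 2 * RR k n" using RR_step[OF assms n] by simp
    then have "m * b = m * (2*a)" using ea eb e2 by simp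
    then have b: "b = 2*a" using mpos by simp
    have "gcd a b = a" unfolding b by simp
    moreover have "eq1_solvable 1 2" unfolding eq1_solvable_def by (rule exI[of _ 0], rule exI[of _ 0]) simp
    ultimately show ?thesis using True par apos unfolding Gamma_def Let_def b by simp
  next
    case False
    then have "RR k (n+1) + m = 2 * RR k n" using RR_step[OF assms n] unfolding m_def by simp
    then have "m * b + m = m * (2*a)" using ea eb e2 by (simp add: algebra_simps)
    then have "m * (b + 1) = m * (2*a)" by (simp add: algebra_simps)
    then have b1: "b + 1 = 2*a" using mpos by (metis mult_cancel_left neq0_conv)
    have a2: "a \<ge> 2"
    proof (rule ccontr)
      assume "\<not> a \<ge> 2"
      then have "a = 1" using apos by simp
      then have "b = 1" using b1 by simp
      then have "m = 2^(n+k) + RR k (n+1)" using eb by simp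
      moreover have "(2::nat)^(n+k) \<ge> 2^(k+1)" using n by (intro power_increasing) auto
      moreover have "(2::nat)^k \<ge> 2^1" using assms by (intro power_increasing) auto
      ultimately show False unfolding m_def by simp
    qed
    have b: "b = 2*a - 1" using b1 by simp
    have g: "gcd a b = 1"
    proof -
      have "gcd a b dvd 2*a - b" by (simp add: dvd_diff_nat)
      moreover have "2*a - b = 1" using b1 by simp
      ultimately have "gcd a b dvd 1" by simp
      then show ?thesis by simp
    qed
    have "\<not> eq1_solvable a b"
    proof
      assume "eq1_solvable a b"
      then obtain x y :: nat where xy: "(of_nat (a * x + b * y) :: rat) = of_nat ((a - 1) * (b - 1)) / 2"
        unfolding eq1_solvable_def by blast
      have ev: "(a-1)*(b-1) = 2*((a-1)*(a-1))" using b a2 by (simp add: algebra_simps)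
      have h2: "(of_nat (2*X)::rat)/2 = of_nat X" for X :: nat by simp
      have "(of_nat (a * x + b * y) :: rat) = of_nat ((a-1)*(a-1))" using xy unfolding ev h2 .
      then have "a * x + b * y = (a-1)*(a-1)" by (simp only: of_nat_eq_iff)
      moreover have "(a-1)*(b-1) div 2 = (a-1)*(a-1)" unfolding ev by simp
      ultimately have "a * x + b * y = (a-1)*(b-1) div 2" by simp
      then show False using no_sol[OF a2, of x y] b by simp
    qed
    then show ?thesis using False par g unfolding Gamma_def Let_def by simp
  qed
qed

end
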